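(* Let $1\le p\le2$, $\epsilon>0$, and $1\le k\le n$. Let $x,\widetilde x\in\mathbb{R}^n$ satisfy $$\|\widetilde x-x\|_p\le\epsilon\,k^{1/p-1}\|x_k-x\|_1 .$$ Then $$\|\widetilde x_k-x\|_1\le(1+3\epsilon)\,\|x_k-x\|_1 .$$
   Context: For $g\in\mathbb{R}^n$, $g_k$ denotes the vector obtained from $g$ by keeping its $k$ entries of largest magnitude (ties broken lexicographically) and setting all other entries to $0$; it is a best $k$-term approximation of $g$ in any $\ell_q$ norm. *)

theory Defs
  imports Complex_Main
begin

text \<open>Vectors in R^n are represented as functions nat => real; only the
entries with index i < n matter.\<close>

definition lpnorm :: "nat \<Rightarrow> real \<Rightarrow> (nat \<Rightarrow> real) \<Rightarrow> real" where
  "lpnorm n p g = (\<Sum>i<n. \<bar>g i\<bar> powr p) powr (1 / p)"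

definition l1norm :: "nat \<Rightarrow> (nat \<Rightarrow> real) \<Rightarrow> real" where
  "l1norm n g = (\<Sum>i<n. \<bar>g i\<bar>)"

definition rank :: "nat \<Rightarrow> (nat \<Rightarrow> real) \<Rightarrow> nat \<Rightarrow> nat" where
  "rank n g i = card {j. j < n \<and> (\<bar>g j\<bar> > \<bar>g i\<bar> \<or> (\<bar>g j\<bar> = \<bar>g i\<bar> \<and> j < i))}"

definition head :: "nat \<Rightarrow> nat \<Rightarrow> (nat \<Rightarrow> real) \<Rightarrow> nat \<Rightarrow> real" where
  "head n k g i = (if i < n \<and> rank n g i < k then g i else 0)"

end

theory Submission imports Defs "HOL-Analysis.Convex" begin

definition prec :: "(nat \<Rightarrow> real) \<Rightarrow> nat \<Rightarrow> nat \<Rightarrow> bool" where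
  "prec g j i \<longleftrightarrow> (\<bar>g j\<bar> > \<bar>g i\<bar> \<or> (\<bar>g j\<bar> = \<bar>g i\<bar> \<and> j < i))"

lemma rank_prec: "rank n g i = card {j. j < n \<and> prec g j i}"
  unfolding rank_def prec_def by simp

lemma prec_trans: "prec g a b \<Longrightarrow> prec g b c \<Longrightarrow> prec g a c"
  unfolding prec_def by auto

lemma prec_irrefl: "\<not> prec g a a" unfolding prec_def by auto

lemma prec_total: "a \<noteq> b \<Longrightarrow> prec g a b \<or> prec g b a" unfolding prec_def by auto

lemma rank_less: assumes "j < n" "prec g j i" shows "rank n g j < rank n g i"
proof -
  have "{l. l < n \<and> prec g l j} \<subset> {l. l < n \<and> prec g l i}"
    using assms prec_trans prec_irrefl by blast
  then show ?thesis unfolding rank_prec by (intro psubset_card_mono) auto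
qed

lemma rank_lt_n: assumes "i < n" shows "rank n g i < n"
proof -
  have "{l. l < n \<and> prec g l i} \<subseteq> {..<n} - {i}" using prec_irrefl by auto
  then have "card {l. l < n \<and> prec g l i} \<le> card ({..<n} - {i})" by (intro card_mono) auto
  then show ?thesis unfolding rank_prec using assms by simp
qed

lemma rank_inj: "inj_on (rank n g) {..<n}"
  unfolding inj_on_def using rank_less prec_total by (metis lessThan_iff less_irrefl)

lemma rank_bij: "bij_betw (rank n g) {..<n} {..<n}"
proof -
  have "rank n g ` {..<n} \<subseteq> {..<n}" using rank_lt_n by auto
  moreover have "card (rank n g ` {..<n}) = card {..<n::nat}" using rank_inj card_image by blast
  ultimately have "rank n g ` {..<n} = {..<n}" by (intro card_subset_eq) auto
  then show ?thesis using rank_inj by (simp add: bij_betw_def)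
qed

lemma card_top: assumes "k \<le> n" shows "card {i. i < n \<and> rank n g i < k} = k"
proof -
  have "rank n g ` {i. i < n \<and> rank n g i < k} = {..<k}"
  proof
    show "rank n g ` {i. i < n \<and> rank n g i < k} \<subseteq> {..<k}" by auto
    show "{..<k} \<subseteq> rank n g ` {i. i < n \<and> rank n g i < k}"
    proof
      fix y assume "y \<in> {..<k}"
      then have "y \<in> rank n g ` {..<n}" using rank_bij assms unfolding bij_betw_def by auto
      then show "y \<in> rank n g ` {i. i < n \<and> rank n g i < k}" using \<open>y \<in> {..<k}\<close> by auto
    qed
  qed
  moreover have "inj_on (rank n g) {i. i < n \<and> rank n g i < k}"
    using rank_inj by (rule inj_on_subset) auto
  ultimately show ?thesis by (metis card_image card_lessThan)
qed

lemma top_ge: assumes "i < n" "rank n g i < k" "j < n" "\<not> rank n g j < k"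
  shows "\<bar>g j\<bar> \<le> \<bar>g i\<bar>"
proof (rule ccontr)
  assume "\<not> ?thesis"
  then have "prec g j i" unfolding prec_def by auto
  then have "rank n g j < rank n g i" using rank_less assms by blast
  then show False using assms by auto
qed

lemma holder_card:
  fixes f :: "nat \<Rightarrow> real"
  assumes "finite A" "p \<ge> 1"
  shows "(\<Sum>i\<in>A. \<bar>f i\<bar>) \<le> real (card A) powr (1 - 1/p) * (\<Sum>i\<in>A. \<bar>f i\<bar> powr p) powr (1/p)"
proof -
  define A' where "A' = {i\<in>A. f i \<noteq> 0}"
  have fin: "finite A'" using assms A'_def by auto
  have s1: "(\<Sum>i\<in>A. \<bar>f i\<bar>) = (\<Sum>i\<in>A'. \<bar>f i\<bar>)"
    unfolding A'_def using assms by (intro sum.mono_neutral_right) auto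
  have s2: "(\<Sum>i\<in>A. \<bar>f i\<bar> powr p) = (\<Sum>i\<in>A'. \<bar>f i\<bar> powr p)"
    unfolding A'_def using assms by (intro sum.mono_neutral_right) auto
  have cA: "card A' \<le> card A" unfolding A'_def using assms by (intro card_mono) auto
  show ?thesis
  proof (cases "A' = {}")
    case True then show ?thesis using s1 by (simp add: sum_nonneg)
  next
    case False
    define m where "m = real (card A')"
    have mpos: "m > 0" using False fin m_def by (simp add: card_gt_0_iff)
    define a where "a = (\<Sum>i\<in>A'. \<bar>f i\<bar>)"
    define Q where "Q = (\<Sum>i\<in>A'. \<bar>f i\<bar> powr p)"
    have apos: "a \<ge> 0" unfolding a_def by (simp add: sum_nonneg)
    have "(\<lambda>x. x powr p) (\<Sum>i\<in>A'. (1/m) *\<^sub>R \<bar>f i\<bar>) \<le> (\<Sum>i\<in>A'. (1/m) * (\<bar>f i\<bar> powr p))"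
      by (rule convex_on_sum[OF fin False powr_convex[OF assms(2)]])
         (use mpos m_def A'_def in auto)
    then have J: "(a/m) powr p \<le> Q/m"
      unfolding a_def Q_def by (simp add: sum_distrib_left[symmetric] sum_divide_distrib[symmetric])
    have "a/m = ((a/m) powr p) powr (1/p)" using assms apos mpos by (simp add: powr_powr)
    also have "\<dots> \<le> (Q/m) powr (1/p)" using J assms apos mpos by (intro powr_mono2) auto
    also have "\<dots> = Q powr (1/p) / m powr (1/p)" using mpos by (simp add: powr_divide Q_def sum_nonneg)
    finally have "a \<le> m * (Q powr (1/p) / m powr (1/p))" using mpos by (simp add: field_simps)
    also have "\<dots> = m powr (1 - 1/p) * Q powr (1/p)" using mpos
      by (simp add: powr_diff field_simps)
    also have "\<dots> \<le> real (card A) powr (1 - 1/p) * Q powr (1/p)"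
      using cA assms mpos m_def by (intro mult_right_mono powr_mono2) auto
    finally show ?thesis using s1 s2 a_def Q_def by simp
  qed
qed


lemma sum_swap_le:
  fixes u :: "nat \<Rightarrow> real"
  assumes "finite B" "finite C" "card B = card C" "\<And>i j. i \<in> B \<Longrightarrow> j \<in> C \<Longrightarrow> u i \<le> u j"
  shows "(\<Sum>i\<in>B. u i) \<le> (\<Sum>j\<in>C. u j)"
proof (cases "card B = 0")
  case True then show ?thesis using assms by simp
next
  case False
  have "real (card C) * (\<Sum>i\<in>B. u i) = (\<Sum>i\<in>B. \<Sum>j\<in>C. u i)" by (simp add: sum_distrib_left)
  also have "\<dots> \<le> (\<Sum>i\<in>B. \<Sum>j\<in>C. u j)" using assms by (intro sum_mono) auto
  also have "\<dots> = real (card B) * (\<Sum>j\<in>C. u j)" by simp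
  finally show ?thesis using False assms by simp
qed

theorem mainTheorem10:
  fixes n k :: nat and p \<epsilon> :: real and x xt :: "nat \<Rightarrow> real"
  assumes "1 \<le> p" "p \<le> 2" "\<epsilon> > 0" "1 \<le> k" "k \<le> n"
    and "lpnorm n p (\<lambda>i. xt i - x i)
           \<le> \<epsilon> * real k powr (1 / p - 1) * l1norm n (\<lambda>i. head n k x i - x i)"
  shows "l1norm n (\<lambda>i. head n k xt i - x i)
           \<le> (1 + 3 * \<epsilon>) * l1norm n (\<lambda>i. head n k x i - x i)"
proof -
  define N where "N = {..<n}"
  define S where "S = {i. i < n \<and> rank n xt i < k}"
  define T where "T = {i. i < n \<and> rank n x i < k}"
  define h where "h = (\<lambda>i. xt i - x i)"
  define \<sigma> where "\<sigma> = l1norm n (\<lambda>i. head n k x i - x i)"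
  have finN: "finite N" unfolding N_def by simp
  have SN: "S \<subseteq> N" and TN: "T \<subseteq> N" unfolding S_def T_def N_def by auto
  have finS: "finite S" and finT: "finite T" using SN TN finN finite_subset by auto
  have cS: "card S = k" unfolding S_def using card_top assms by blast
  have cT: "card T = k" unfolding T_def using card_top assms by blast
  have cST: "card (S - T) = card (T - S)"
    using cS cT finS finT by (metis card_Diff_subset_Int Int_commute finite_Int)
  have sig: "\<sigma> = (\<Sum>i\<in>N - T. \<bar>x i\<bar>)"
  proof -
    have "\<sigma> = (\<Sum>i\<in>N. if i \<in> T then 0 else \<bar>x i\<bar>)"
      unfolding \<sigma>_def l1norm_def N_def T_def head_def by (intro sum.cong) auto
    also have "\<dots> = (\<Sum>i\<in>N - T. \<bar>x i\<bar>)"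
      using finN TN by (simp add: sum.If_cases Int_absorb2 Diff_eq Int_commute)
    finally show ?thesis .
  qed
  have lhs: "l1norm n (\<lambda>i. head n k xt i - x i) = (\<Sum>i\<in>S. \<bar>h i\<bar>) + (\<Sum>i\<in>N - S. \<bar>x i\<bar>)"
  proof -
    have "l1norm n (\<lambda>i. head n k xt i - x i) = (\<Sum>i\<in>N. if i \<in> S then \<bar>h i\<bar> else \<bar>x i\<bar>)"
      unfolding h_def l1norm_def N_def S_def head_def by (intro sum.cong) auto
    also have "\<dots> = (\<Sum>i\<in>S. \<bar>h i\<bar>) + (\<Sum>i\<in>N - S. \<bar>x i\<bar>)"
      using finN SN by (simp add: sum.If_cases Int_absorb2 Diff_eq Int_commute Int_absorb1)
    finally show ?thesis .
  qed
  define R where "R = N - (S \<union> T)"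
  have d1: "(\<Sum>i\<in>N - S. \<bar>x i\<bar>) = (\<Sum>i\<in>R. \<bar>x i\<bar>) + (\<Sum>i\<in>T - S. \<bar>x i\<bar>)"
  proof -
    have e: "N - S = R \<union> (T - S)" "R \<inter> (T - S) = {}" unfolding R_def using TN by auto
    have "finite R" "finite (T - S)" unfolding R_def using finN finT by auto
    then show ?thesis unfolding e(1) using e(2) by (rule sum.union_disjoint)
  qed
  have d2: "\<sigma> = (\<Sum>i\<in>R. \<bar>x i\<bar>) + (\<Sum>i\<in>S - T. \<bar>x i\<bar>)"
  proof -
    have e: "N - T = R \<union> (S - T)" "R \<inter> (S - T) = {}" unfolding R_def using SN by auto
    have "finite R" "finite (S - T)" unfolding R_def using finN finS by auto
    then show ?thesis unfolding sig e(1) using e(2) by (rule sum.union_disjoint)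
  qed
  have sw: "(\<Sum>i\<in>T - S. \<bar>xt i\<bar>) \<le> (\<Sum>i\<in>S - T. \<bar>xt i\<bar>)"
  proof (rule sum_swap_le)
    show "finite (T - S)" "finite (S - T)" using finS finT by auto
    show "card (T - S) = card (S - T)" using cST by simp
    fix i j assume "i \<in> T - S" "j \<in> S - T"
    then show "\<bar>xt i\<bar> \<le> \<bar>xt j\<bar>" unfolding S_def T_def by (intro top_ge[of j n]) auto
  qed
  have a1: "(\<Sum>i\<in>T - S. \<bar>x i\<bar>) \<le> (\<Sum>i\<in>T - S. \<bar>xt i\<bar>) + (\<Sum>i\<in>T - S. \<bar>h i\<bar>)"
    unfolding h_def sum.distrib[symmetric] by (intro sum_mono) auto
  have a2: "(\<Sum>i\<in>S - T. \<bar>xt i\<bar>) \<le> (\<Sum>i\<in>S - T. \<bar>x i\<bar>) + (\<Sum>i\<in>S - T. \<bar>h i\<bar>)"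
    unfolding h_def sum.distrib[symmetric] by (intro sum_mono) auto
  have hb: "(\<Sum>i\<in>A. \<bar>h i\<bar>) \<le> \<epsilon> * \<sigma>" if "A \<subseteq> N" "card A \<le> k" for A
  proof -
    have finA: "finite A" using that finN finite_subset by auto
    have sp: "0 \<le> (\<Sum>i\<in>A. \<bar>h i\<bar> powr p)" by (simp add: sum_nonneg)
    have "(\<Sum>i\<in>A. \<bar>h i\<bar>) \<le> real (card A) powr (1 - 1/p) * (\<Sum>i\<in>A. \<bar>h i\<bar> powr p) powr (1/p)"
      using holder_card finA assms by blast
    also have "\<dots> \<le> real k powr (1 - 1/p) * (\<Sum>i\<in>N. \<bar>h i\<bar> powr p) powr (1/p)"
    proof (intro mult_mono powr_mono2 sum_mono2)
      show "real (card A) \<le> real k" using that by simp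
      show "0 \<le> 1 - 1/p" using assms by (simp add: field_simps)
    qed (use assms that finN sp in \<open>auto simp: sum_nonneg\<close>)
    also have "\<dots> = real k powr (1 - 1/p) * lpnorm n p h"
      unfolding lpnorm_def N_def by simp
    also have "\<dots> \<le> real k powr (1 - 1/p) * (\<epsilon> * real k powr (1 / p - 1) * \<sigma>)"
      using assms(6) unfolding h_def \<sigma>_def by (intro mult_left_mono) auto
    also have "\<dots> = \<epsilon> * \<sigma> * (real k powr (1 - 1/p) * real k powr (1/p - 1))" by simp
    also have "\<dots> = \<epsilon> * \<sigma>"
      using assms by (simp add: powr_add[symmetric])
    finally show ?thesis .
  qed
  have b1: "(\<Sum>i\<in>S. \<bar>h i\<bar>) \<le> \<epsilon> * \<sigma>" using hb SN cS by simp
  have b2: "(\<Sum>i\<in>T - S. \<bar>h i\<bar>) \<le> \<epsilon> * \<sigma>"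
    using hb[of "T - S"] TN cT finT card_mono[of T "T - S"] by auto
  have b3: "(\<Sum>i\<in>S - T. \<bar>h i\<bar>) \<le> \<epsilon> * \<sigma>"
    using hb[of "S - T"] SN cS finS card_mono[of S "S - T"] by auto
  have "l1norm n (\<lambda>i. head n k xt i - x i) \<le> \<sigma> + 3 * (\<epsilon> * \<sigma>)"
    using lhs d1 d2 sw a1 a2 b1 b2 b3 by linarith
  then show ?thesis unfolding \<sigma>_def by (simp add: algebra_simps)
qed

end
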